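(* Let $\mathit{VI}$ be a finite set of variables with $\#\mathit{VI}=n$. For each $sh_1,sh_2\in\mathit{SH}$, each $V\in\wp(\mathit{VI})$ and each $k\in\mathbb{N}$ with $1<k\le n$: if $\rho_{\mathit{TSD}_k}(sh_1)\subseteq\rho_{\mathit{TSD}_k}(sh_2)$ then $\mathrm{rel}(V,sh_1)^\star\subseteq\mathrm{rel}(V,sh_2)^\star$.
   Context: $\mathit{SG}=\wp(\mathit{VI})\setminus\{\emptyset\}$, $\mathit{SH}=\wp(\mathit{SG})$. $\rho_{\mathit{TSD}_k}(sh)=\{\,S\in\mathit{SG}\mid \forall T\subseteq S:\ \#T<k\implies S=\bigcup\{U\in sh\mid T\subseteq U\subseteq S\}\,\}$. $\mathrm{rel}(V,sh)=\{S\in sh\mid S\cap V\ne\emptyset\}$; $sh^\star=\{S\in\mathit{SG}\mid\exists sh'\subseteq sh: S=\bigcup sh'\}$. *)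

theory Defs
  imports Main
begin

definition SG :: "'a set \<Rightarrow> 'a set set" where
  "SG VI = Pow VI - {{}}"

definition SH :: "'a set \<Rightarrow> 'a set set set" where
  "SH VI = Pow (SG VI)"

definition rho_TSD :: "'a set \<Rightarrow> nat \<Rightarrow> 'a set set \<Rightarrow> 'a set set" where
  "rho_TSD VI k sh = {S \<in> SG VI. \<forall>T. T \<subseteq> S \<longrightarrow> card T < k \<longrightarrow>
       S = \<Union>{U \<in> sh. T \<subseteq> U \<and> U \<subseteq> S}}"

definition rel :: "'a set \<Rightarrow> 'a set set \<Rightarrow> 'a set set" where
  "rel V sh = {S \<in> sh. S \<inter> V \<noteq> {}}"

definition star :: "'a set \<Rightarrow> 'a set set \<Rightarrow> 'a set set" where
  "star VI sh = {S \<in> SG VI. \<exists>sh'. sh' \<subseteq> sh \<and> S = \<Union>sh'}"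

end

theory Submission
  imports Defs
begin

theorem lemma3p19:
  fixes VI :: "'a set" and sh1 sh2 :: "'a set set" and V :: "'a set" and k n :: nat
  assumes "finite VI" and "card VI = n"
    and "sh1 \<in> SH VI" and "sh2 \<in> SH VI"
    and "V \<in> Pow VI"
    and "1 < k" and "k \<le> n"
    and "rho_TSD VI k sh1 \<subseteq> rho_TSD VI k sh2"
  shows "star VI (rel V sh1) \<subseteq> star VI (rel V sh2)"
proof
  fix X assume "X \<in> star VI (rel V sh1)"
  then obtain sh' where X: "X \<in> SG VI" "sh' \<subseteq> rel V sh1" "X = \<Union>sh'"
    unfolding star_def by blast
  have sub: "S \<in> rho_TSD VI k sh2" if "S \<in> sh1" for S
  proof -
    have "S \<in> SG VI" using that assms(3) unfolding SH_def by blast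
    moreover have "S = \<Union>{U \<in> sh1. T \<subseteq> U \<and> U \<subseteq> S}" if "T \<subseteq> S" for T
      using that \<open>S \<in> sh1\<close> by blast
    ultimately have "S \<in> rho_TSD VI k sh1" unfolding rho_TSD_def by blast
    thus ?thesis using assms(8) by blast
  qed
  let ?sh = "{U \<in> sh2. U \<subseteq> X \<and> U \<inter> V \<noteq> {}}"
  have "X = \<Union>?sh"
  proof
    show "\<Union>?sh \<subseteq> X" by blast
    show "X \<subseteq> \<Union>?sh"
    proof
      fix y assume "y \<in> X"
      then obtain S where S: "S \<in> sh'" "y \<in> S" using X(3) by (simp only: Union_iff) blast
      hence S1: "S \<in> sh1" and "S \<inter> V \<noteq> {}" using X(2) unfolding rel_def by auto
      then obtain v where v: "v \<in> S" "v \<in> V" by blast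
      have "S \<in> rho_TSD VI k sh2" using sub S1 .
      have vS: "{v} \<subseteq> S" and vk: "card {v} < k" using v assms(6) by auto
      have all: "\<forall>T. T \<subseteq> S \<longrightarrow> card T < k \<longrightarrow> S = \<Union>{U \<in> sh2. T \<subseteq> U \<and> U \<subseteq> S}"
        using \<open>S \<in> rho_TSD VI k sh2\<close> unfolding rho_TSD_def by (simp only: mem_Collect_eq) (erule conjE, assumption)
      have eq: "S = \<Union>{U \<in> sh2. {v} \<subseteq> U \<and> U \<subseteq> S}"
        using all vS vk by (elim allE[of _ "{v}"]) (erule impE, assumption, erule impE, assumption, assumption)
      have "y \<in> \<Union>{U \<in> sh2. {v} \<subseteq> U \<and> U \<subseteq> S}"
        using equalityD1[OF eq] S(2) by (rule subsetD)
      then obtain U where "U \<in> {U \<in> sh2. {v} \<subseteq> U \<and> U \<subseteq> S}" "y \<in> U" by (rule UnionE)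
      hence "U \<in> sh2" "v \<in> U" "U \<subseteq> S" "y \<in> U" by auto
      moreover have "S \<subseteq> X" using S(1) X(3) by (simp only: Sup_upper)
      ultimately show "y \<in> \<Union>?sh" using v by blast
    qed
  qed
  thus "X \<in> star VI (rel V sh2)" using X(1) unfolding star_def rel_def by (intro CollectI conjI exI[of _ ?sh]) auto
qed

end
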